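(* Let $(X,d)$ be a metric space, $x\in X$, $A$ a complex Banach algebra and $\varphi\in\Delta(A)$. Let $D:Lip_dX\to\mathbb{C}$ be a bounded linear functional, and define $D_\varphi:Lip_d(X,A)\to\mathbb{C}$ by $D_\varphi(f)=D(\varphi\circ f)$. Then the following are equivalent: (i) $D$ is a point derivation at $x$, i.e. $D(fg)=f(x)D(g)+g(x)D(f)$ for all $f,g\in Lip_dX$; (ii) $D_\varphi$ is an $(x,\varphi)$-point derivation on $Lip_d(X,A)$, i.e. $D_\varphi(fg)=\varphi(f(x))D_\varphi(g)+\varphi(g(x))D_\varphi(f)$ for all $f,g\in Lip_d(X,A)$.
   Context: For a Banach algebra $A$, $Lip_d(X,A)$ is the Banach algebra (pointwise operations) of bounded functions $f:X\to A$ with $P_{d,A}(f)=\sup_{x\neq y}\|f(x)-f(y)\|_A/d(x,y)<\infty$, normed by $\|f\|_{\infty,A}+P_{d,A}(f)$; $Lip_dX=Lip_d(X,\mathbb{C})$. $\Delta(A)$ is the set of nonzero multiplicative linear functionals on $A$ (for $f\in Lip_d(X,A)$, $\varphi\circ f\in Lip_dX$). *)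

theory Defs
  imports "HOL-Analysis.Analysis"
begin

text \<open>Complex Banach algebras (not necessarily unital): a real Banach algebra
  (submultiplicative norm, complete) equipped with a complex scalar multiplication
  extending the real one, compatible with the norm and the multiplication.\<close>

class complex_banach_algebra = real_normed_algebra + banach +
  fixes scaleC :: "complex \<Rightarrow> 'a \<Rightarrow> 'a" (infixr \<open>*\<^sub>C\<close> 75)
  assumes scaleC_add_right: "a *\<^sub>C (x + y) = a *\<^sub>C x + a *\<^sub>C y"
    and scaleC_add_left: "(a + b) *\<^sub>C x = a *\<^sub>C x + b *\<^sub>C x"
    and scaleC_scaleC: "a *\<^sub>C (b *\<^sub>C x) = (a * b) *\<^sub>C x"
    and scaleC_one: "1 *\<^sub>C x = x"
    and scaleC_of_real: "complex_of_real r *\<^sub>C x = r *\<^sub>R x"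
    and norm_scaleC: "norm (a *\<^sub>C x) = cmod a * norm x"
    and scaleC_mult_left: "(a *\<^sub>C x) * y = a *\<^sub>C (x * y)"
    and scaleC_mult_right: "x * (a *\<^sub>C y) = a *\<^sub>C (x * y)"

definition Lip :: "('a::metric_space \<Rightarrow> 'b::real_normed_vector) set" where
  "Lip = {f. bounded (range f) \<and> (\<exists>L. \<forall>x y. norm (f x - f y) \<le> L * dist x y)}"

definition lip_const :: "('a::metric_space \<Rightarrow> 'b::real_normed_vector) \<Rightarrow> real" where
  "lip_const f = (SUP p \<in> {p. fst p \<noteq> snd p}. norm (f (fst p) - f (snd p)) / dist (fst p) (snd p))"

definition lip_norm :: "('a::metric_space \<Rightarrow> 'b::real_normed_vector) \<Rightarrow> real" where
  "lip_norm f = (SUP x. norm (f x)) + lip_const f"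

definition bounded_lin_functional :: "(('a::metric_space \<Rightarrow> complex) \<Rightarrow> complex) \<Rightarrow> bool" where
  "bounded_lin_functional D \<longleftrightarrow>
     (\<forall>f\<in>Lip. \<forall>g\<in>Lip. D (\<lambda>t. f t + g t) = D f + D g) \<and>
     (\<forall>f\<in>Lip. \<forall>c. D (\<lambda>t. c * f t) = c * D f) \<and>
     (\<exists>C. \<forall>f\<in>Lip. cmod (D f) \<le> C * lip_norm f)"

definition char_space :: "('b::complex_banach_algebra \<Rightarrow> complex) set" where
  "char_space = {\<phi>. (\<forall>a b. \<phi> (a + b) = \<phi> a + \<phi> b) \<and> (\<forall>c a. \<phi> (c *\<^sub>C a) = c * \<phi> a)
                    \<and> (\<forall>a b. \<phi> (a * b) = \<phi> a * \<phi> b) \<and> (\<exists>a. \<phi> a \<noteq> 0)}"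

definition point_derivation :: "'a::metric_space \<Rightarrow> (('a \<Rightarrow> complex) \<Rightarrow> complex) \<Rightarrow> bool" where
  "point_derivation x D \<longleftrightarrow>
     (\<forall>f\<in>Lip. \<forall>g\<in>Lip. D (\<lambda>t. f t * g t) = f x * D g + g x * D f)"

definition phi_point_derivation ::
  "'a::metric_space \<Rightarrow> ('b::complex_banach_algebra \<Rightarrow> complex) \<Rightarrow> (('a \<Rightarrow> 'b) \<Rightarrow> complex) \<Rightarrow> bool" where
  "phi_point_derivation x \<phi> T \<longleftrightarrow>
     (\<forall>f\<in>Lip. \<forall>g\<in>Lip. T (\<lambda>t. f t * g t) = \<phi> (f x) * T g + \<phi> (g x) * T f)"

end

theory Submission
  imports Defs
begin

primrec pw :: "nat \<Rightarrow> 'a::real_normed_algebra \<Rightarrow> 'a" where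
  "pw 0 c = c" | "pw (Suc n) c = c * pw n c"

lemma pw_norm: "norm (pw n c) \<le> norm c ^ Suc n"
proof (induction n)
  case 0 then show ?case by simp
next
  case (Suc n)
  have "norm (pw (Suc n) c) \<le> norm c * norm (pw n c)" by (simp add: norm_mult_ineq)
  also have "\<dots> \<le> norm c * norm c ^ Suc n" using Suc by (simp add: mult_left_mono)
  finally show ?case by simp
qed

lemma no_char_one:
  fixes c :: "'b::complex_banach_algebra" and \<phi> :: "'b \<Rightarrow> complex"
  assumes add: "\<And>a b. \<phi> (a + b) = \<phi> a + \<phi> b"
    and mul: "\<And>a b. \<phi> (a * b) = \<phi> a * \<phi> b"
    and nc: "norm c < 1" and pc: "\<phi> c = 1"
  shows False
proof -
  have s1: "summable (\<lambda>n. norm c ^ Suc n)"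
    using nc by (simp add: summable_geometric)
  have "summable (\<lambda>n. norm (pw n c))"
    by (rule summable_comparison_test'[OF s1]) (use pw_norm in \<open>simp del: power_Suc\<close>)
  then have s: "summable (\<lambda>n. pw n c)" by (rule summable_norm_cancel)
  define b where "b = suminf (\<lambda>n. pw n c)"
  have "b = pw 0 c + suminf (\<lambda>n. pw (Suc n) c)"
    unfolding b_def using suminf_split_head[OF s] by simp
  also have "suminf (\<lambda>n. pw (Suc n) c) = c * b"
    unfolding b_def by (simp add: suminf_mult[OF s])
  finally have "b = c + c * b" by simp
  then have "\<phi> b = \<phi> c + \<phi> c * \<phi> b" using add mul by metis
  then have "\<phi> b = 1 + \<phi> b" using pc by simp
  then have "(1::complex) = 0" by (metis add_cancel_right_left)
  then show False by simp
qed

lemma char_bound: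
  fixes \<phi> :: "'b::complex_banach_algebra \<Rightarrow> complex"
  assumes "\<phi> \<in> char_space"
  shows "cmod (\<phi> a) \<le> norm a"
proof (rule ccontr)
  assume H: "\<not> cmod (\<phi> a) \<le> norm a"
  have add: "\<And>a b. \<phi> (a + b) = \<phi> a + \<phi> b"
    and sc: "\<And>c a. \<phi> (c *\<^sub>C a) = c * \<phi> a"
    and mul: "\<And>a b. \<phi> (a * b) = \<phi> a * \<phi> b"
    using assms unfolding char_space_def by auto
  have nz: "\<phi> a \<noteq> 0" using H by (metis norm_ge_zero norm_zero)
  define c where "c = inverse (\<phi> a) *\<^sub>C a"
  have "\<phi> c = 1" unfolding c_def sc using nz by simp
  moreover have "norm c < 1"
  proof -
    have "norm c = norm a / cmod (\<phi> a)"
      unfolding c_def norm_scaleC by (simp add: norm_inverse divide_inverse_commute)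
    also have "\<dots> < 1" using H nz by simp
    finally show ?thesis .
  qed
  ultimately show False using no_char_one[OF add mul] by blast
qed

lemma char_diff:
  assumes "\<phi> \<in> char_space"
  shows "\<phi> (a - b) = \<phi> a - \<phi> b"
proof -
  have "\<phi> (a - b + b) = \<phi> (a - b) + \<phi> b" using assms unfolding char_space_def by blast
  then show ?thesis by simp
qed

lemma comp_Lip:
  fixes \<phi> :: "'b::complex_banach_algebra \<Rightarrow> complex" and f :: "'a::metric_space \<Rightarrow> 'b"
  assumes ph: "\<phi> \<in> char_space" and f: "f \<in> Lip"
  shows "\<phi> \<circ> f \<in> Lip"
proof -
  from f obtain L where L: "\<And>x y. norm (f x - f y) \<le> L * dist x y" and b: "bounded (range f)"
    unfolding Lip_def by auto
  from b obtain B where B: "\<And>x. norm (f x) \<le> B" unfolding bounded_iff by auto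
  have "bounded (range (\<phi> \<circ> f))" unfolding bounded_iff
    using char_bound[OF ph] B by (metis (no_types, lifting) comp_apply imageE order_trans)
  moreover have "\<forall>x y. norm ((\<phi> \<circ> f) x - (\<phi> \<circ> f) y) \<le> L * dist x y"
    using char_bound[OF ph] char_diff[OF ph] L by (metis comp_apply order_trans)
  ultimately show ?thesis unfolding Lip_def by auto
qed

theorem theorem2p17:
  fixes x :: "'a::metric_space"
    and \<phi> :: "'b::complex_banach_algebra \<Rightarrow> complex"
    and D :: "('a \<Rightarrow> complex) \<Rightarrow> complex"
  assumes "\<phi> \<in> char_space"
    and "bounded_lin_functional D"
  shows "point_derivation x D \<longleftrightarrow> phi_point_derivation x \<phi> (\<lambda>f. D (\<phi> \<circ> f))"
proof
  assume pd: "point_derivation x D"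
  have mul: "\<And>a b. \<phi> (a * b) = \<phi> a * \<phi> b" using assms(1) unfolding char_space_def by auto
  show "phi_point_derivation x \<phi> (\<lambda>f. D (\<phi> \<circ> f))"
    unfolding phi_point_derivation_def
  proof (intro ballI)
    fix f g :: "'a \<Rightarrow> 'b" assume f: "f \<in> Lip" and g: "g \<in> Lip"
    have e: "\<phi> \<circ> (\<lambda>t. f t * g t) = (\<lambda>t. (\<phi> \<circ> f) t * (\<phi> \<circ> g) t)"
      by (simp add: mul o_def)
    show "D (\<phi> \<circ> (\<lambda>t. f t * g t)) = \<phi> (f x) * D (\<phi> \<circ> g) + \<phi> (g x) * D (\<phi> \<circ> f)"
      unfolding e using pd comp_Lip[OF assms(1) f] comp_Lip[OF assms(1) g]
      unfolding point_derivation_def by (simp add: o_def)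
  qed
next
  assume pd: "phi_point_derivation x \<phi> (\<lambda>f. D (\<phi> \<circ> f))"
  have sc: "\<And>c a. \<phi> (c *\<^sub>C a) = c * \<phi> a"
    and mul: "\<And>a b. \<phi> (a * b) = \<phi> a * \<phi> b"
    using assms(1) unfolding char_space_def by auto
  obtain a0 where a0: "\<phi> a0 \<noteq> 0" using assms(1) unfolding char_space_def by auto
  define a where "a = inverse (\<phi> a0) *\<^sub>C a0"
  have pa: "\<phi> a = 1" unfolding a_def sc using a0 by simp
  have liftLip: "(\<lambda>t. f t *\<^sub>C a) \<in> Lip" if f: "f \<in> Lip" for f :: "'a \<Rightarrow> complex"
  proof -
    from f obtain L where L: "\<And>x y. norm (f x - f y) \<le> L * dist x y" and b: "bounded (range f)"
      unfolding Lip_def by auto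
    from b obtain B where B: "\<And>x. norm (f x) \<le> B" unfolding bounded_iff by auto
    have "bounded (range (\<lambda>t. f t *\<^sub>C a))" unfolding bounded_iff
    proof (intro exI ballI)
      fix y assume "y \<in> range (\<lambda>t. f t *\<^sub>C a)"
      then obtain t where "y = f t *\<^sub>C a" by auto
      then show "norm y \<le> B * norm a"
        using B[of t] by (simp add: norm_scaleC mult_right_mono)
    qed
    moreover have "norm (f s *\<^sub>C a - f t *\<^sub>C a) \<le> (L * norm a) * dist s t" for s t
    proof -
      have "f s *\<^sub>C a - f t *\<^sub>C a = (f s - f t) *\<^sub>C a"
        by (metis add_diff_cancel diff_add_cancel scaleC_add_left)
      then have "norm (f s *\<^sub>C a - f t *\<^sub>C a) = cmod (f s - f t) * norm a"
        by (simp add: norm_scaleC)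
      also have "\<dots> \<le> L * dist s t * norm a" using L[of s t] by (simp add: mult_right_mono)
      finally show ?thesis by (simp add: algebra_simps)
    qed
    ultimately show ?thesis unfolding Lip_def by blast
  qed
  have comp: "\<phi> \<circ> (\<lambda>t. f t *\<^sub>C a) = f" for f :: "'a \<Rightarrow> complex"
    by (simp add: o_def sc pa)
  show "point_derivation x D"
    unfolding point_derivation_def
  proof (intro ballI)
    fix f g :: "'a \<Rightarrow> complex" assume f: "f \<in> Lip" and g: "g \<in> Lip"
    have e: "\<phi> \<circ> (\<lambda>t. (f t *\<^sub>C a) * (g t *\<^sub>C a)) = (\<lambda>t. f t * g t)"
      by (simp add: o_def mul sc pa)
    have "D (\<phi> \<circ> (\<lambda>t. (f t *\<^sub>C a) * (g t *\<^sub>C a))) =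
          \<phi> (f x *\<^sub>C a) * D (\<phi> \<circ> (\<lambda>t. g t *\<^sub>C a)) + \<phi> (g x *\<^sub>C a) * D (\<phi> \<circ> (\<lambda>t. f t *\<^sub>C a))"
      using pd liftLip[OF f] liftLip[OF g] unfolding phi_point_derivation_def
      by (elim ballE) (auto simp only:)
    then show "D (\<lambda>t. f t * g t) = f x * D g + g x * D f"
      unfolding e comp by (simp add: sc pa)
  qed
qed

end
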